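(* Let $w$ be an instance of Metric-MAXCUT on a finite set $V$, let $\gamma\ge1$ and let $(L,R)$ be a $\gamma$-locally stable cut. Then for every $x\in L$ and $z\in R$, $$w(x,z)\ge\left(\frac{\gamma^2-1}{\gamma}\right)\cdot\frac{w(x,R)}{\gamma|R|+|L|}.$$
   Context: An instance of Metric-MAXCUT is a finite set $V$ with a metric $w$. For $x\in V$ and $B\subseteq V$, $w(x,B)=\sum_{b\in B}w(x,b)$. A cut $(L,R)$ (partition of $V$, not necessarily maximal) is $\gamma$-locally stable if for every vertex $x$ the total weight of edges from $x$ to the opposite side is at least $\gamma$ times the total weight of edges from $x$ to its own side, i.e. $w(x,R)\ge\gamma w(x,L)$ for $x\in L$ and $w(z,L)\ge\gamma w(z,R)$ for $z\in R$. *)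

theory Defs
  imports Main "HOL.Real"
begin

definition metric_on :: "'a set \<Rightarrow> ('a \<Rightarrow> 'a \<Rightarrow> real) \<Rightarrow> bool" where
  "metric_on V w \<longleftrightarrow>
     (\<forall>x\<in>V. \<forall>y\<in>V. w x y \<ge> 0) \<and>
     (\<forall>x\<in>V. \<forall>y\<in>V. w x y = 0 \<longleftrightarrow> x = y) \<and>
     (\<forall>x\<in>V. \<forall>y\<in>V. w x y = w y x) \<and>
     (\<forall>x\<in>V. \<forall>y\<in>V. \<forall>z\<in>V. w x z \<le> w x y + w y z)"

definition wset :: "('a \<Rightarrow> 'a \<Rightarrow> real) \<Rightarrow> 'a \<Rightarrow> 'a set \<Rightarrow> real" where
  "wset w x B = (\<Sum>b\<in>B. w x b)"

definition is_cut :: "'a set \<Rightarrow> 'a set \<Rightarrow> 'a set \<Rightarrow> bool" where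
  "is_cut V L R \<longleftrightarrow> L \<union> R = V \<and> L \<inter> R = {}"

definition locally_stable ::
  "real \<Rightarrow> ('a \<Rightarrow> 'a \<Rightarrow> real) \<Rightarrow> 'a set \<Rightarrow> 'a set \<Rightarrow> bool" where
  "locally_stable \<gamma> w L R \<longleftrightarrow>
     (\<forall>x\<in>L. wset w x R \<ge> \<gamma> * wset w x L) \<and>
     (\<forall>z\<in>R. wset w z L \<ge> \<gamma> * wset w z R)"

end

theory Submission
  imports Defs
begin

theorem proposition3:
  fixes V L R :: "'a set" and w :: "'a \<Rightarrow> 'a \<Rightarrow> real" and \<gamma> :: real
  assumes "finite V"
    and "metric_on V w"
    and "\<gamma> \<ge> 1"
    and "is_cut V L R"
    and "locally_stable \<gamma> w L R"
    and "x \<in> L" and "z \<in> R"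
  shows "w x z \<ge> ((\<gamma>^2 - 1) / \<gamma>) * (wset w x R / (\<gamma> * real (card R) + real (card L)))"
proof -
  have LV: "L \<subseteq> V" and RV: "R \<subseteq> V" using assms(4) unfolding is_cut_def by auto
  have fL: "finite L" and fR: "finite R" using LV RV assms(1) finite_subset by auto
  define a where "a = w x z"
  have xV: "x \<in> V" and zV: "z \<in> V" using LV RV assms(6,7) by auto
  have m: "\<And>p q. p\<in>V \<Longrightarrow> q\<in>V \<Longrightarrow> w p q = w q p"
    and tri: "\<And>p q r. p\<in>V \<Longrightarrow> q\<in>V \<Longrightarrow> r\<in>V \<Longrightarrow> w p r \<le> w p q + w q r"
    using assms(2) unfolding metric_on_def by blast+
  have "wset w x R \<le> (\<Sum>y\<in>R. a + w z y)"
    unfolding wset_def a_def using RV by (intro sum_mono) (auto intro: tri[OF xV zV])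
  also have "\<dots> = real (card R) * a + wset w z R" by (simp add: sum.distrib wset_def)
  finally have h1: "wset w x R \<le> real (card R) * a + wset w z R" .
  have "wset w z L \<le> (\<Sum>y\<in>L. a + w x y)"
    unfolding wset_def a_def using LV
    by (intro sum_mono) (metis subsetD tri[OF zV xV] m[OF zV xV])
  also have "\<dots> = real (card L) * a + wset w x L" by (simp add: sum.distrib wset_def)
  finally have h2: "wset w z L \<le> real (card L) * a + wset w x L" .
  have s1: "\<gamma> * wset w x L \<le> wset w x R" and s2: "\<gamma> * wset w z R \<le> wset w z L"
    using assms(5,6,7) unfolding locally_stable_def by auto
  have g: "\<gamma> > 0" using assms(3) by linarith
  define W where "W = wset w x R"
  have "\<gamma>^2 * W \<le> \<gamma>^2 * real (card R) * a + \<gamma> * (\<gamma> * wset w z R)"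
  proof -
    have "\<gamma>^2 * W \<le> \<gamma>^2 * (real (card R) * a + wset w z R)"
      using h1 unfolding W_def by (simp add: mult_left_mono)
    thus ?thesis by (simp add: power2_eq_square algebra_simps)
  qed
  also have "\<dots> \<le> \<gamma>^2 * real (card R) * a + \<gamma> * (real (card L) * a + wset w x L)"
    using s2 h2 g by (simp add: mult_left_mono)
  also have "\<dots> = \<gamma>^2 * real (card R) * a + \<gamma> * real (card L) * a + \<gamma> * wset w x L"
    by (simp add: algebra_simps)
  also have "\<dots> \<le> \<gamma>^2 * real (card R) * a + \<gamma> * real (card L) * a + W"
    using s1 unfolding W_def by simp
  finally have key: "(\<gamma>^2 - 1) * W \<le> a * \<gamma> * (\<gamma> * real (card R) + real (card L))"
    by (simp add: algebra_simps power2_eq_square)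
  have "card R > 0" using fR assms(7) card_gt_0_iff by blast
  hence D: "\<gamma> * real (card R) + real (card L) > 0" using g by (simp add: add_pos_nonneg)
  have "((\<gamma>^2 - 1) / \<gamma>) * (W / (\<gamma> * real (card R) + real (card L)))
        = ((\<gamma>^2 - 1) * W) / (\<gamma> * (\<gamma> * real (card R) + real (card L)))" by simp
  also have "\<dots> \<le> a" using key g D by (simp add: divide_le_eq mult_ac)
  finally show ?thesis unfolding W_def a_def .
qed

end
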